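(* Let $G$ be a group with the unique root property which is generated by the union of two subgroups $A$ and $B$, let $H$ be a finite-index subgroup of $G$, and let $\varphi:H\to H$ be an automorphism. If $\varphi\neq\mathrm{id}$ but $\varphi|_{H\cap A}=\mathrm{id}$ and $\varphi|_{H\cap B}=\mathrm{id}$, then $\varphi$ does not extend to an automorphism of $G$.
   Context: A group $G$ has the unique root property if for all $x,y\in G$ and every positive integer $n$, $x^n=y^n$ implies $x=y$. *)

theory Defs
  imports "HOL-Algebra.Algebra"
begin

definition unique_root_property :: "('a, 'b) monoid_scheme \<Rightarrow> bool" where
  "unique_root_property G \<longleftrightarrow>
     (\<forall>x\<in>carrier G. \<forall>y\<in>carrier G. \<forall>n::nat. n > 0 \<longrightarrow>
        x [^]\<^bsub>G\<^esub> n = y [^]\<^bsub>G\<^esub> n \<longrightarrow> x = y)"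

end

theory Submission
  imports Defs
begin

lemma sub_pow_closed:
  assumes "group G" "subgroup A G" "a \<in> A"
  shows "a [^]\<^bsub>G\<^esub> (n::nat) \<in> A"
proof (induction n)
  case 0 then show ?case using assms by (simp add: subgroup.one_closed)
next
  case (Suc n)
  then show ?case using assms
    by (simp add: subgroup.m_closed)
qed

lemma pow_in_fin_index:
  fixes G (structure)
  assumes G: "group G" and H: "subgroup H G" and fin: "finite (rcosets\<^bsub>G\<^esub> H)"
    and a: "a \<in> carrier G"
  shows "\<exists>n>0. a [^]\<^bsub>G\<^esub> (n::nat) \<in> H"
proof -
  interpret group G by (rule G)
  define f where "f = (\<lambda>k::nat. H #> a [^] k)"
  have "range f \<subseteq> rcosets H" unfolding f_def using a subgroup.subset[OF H] by (auto intro!: rcosetsI)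
  hence "finite (range f)" using fin finite_subset by blast
  hence "\<not> inj f" using finite_imageD infinite_UNIV_nat by blast
  then obtain i j where ij: "i \<noteq> j" "f i = f j" unfolding inj_def by blast
  then obtain i j where ij: "i < j" "f i = f j"
    by (metis linorder_neq_iff)
  have "a [^] j \<in> H #> a [^] i" using ij(2) rcos_self[OF _ H, of "a [^] j"] a unfolding f_def by simp
  hence "a [^] j \<otimes> inv (a [^] i) \<in> H"
    using subgroup.rcos_module_imp[OF H G] a by simp
  moreover have "a [^] j = a [^] (j - i) \<otimes> a [^] i"
    using nat_pow_mult[OF a, of "j-i" i] ij(1) by simp
  ultimately have "a [^] (j - i) \<in> H" using a by (simp add: m_assoc)
  thus ?thesis using ij(1) by (intro exI[of _ "j - i"]) simp
qed

lemma main_aux: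
  fixes G (structure) and \<psi> :: "'a \<Rightarrow> 'a" and \<phi> :: "'a \<Rightarrow> 'a"
  assumes "group G"
    and "unique_root_property G"
    and "subgroup A G" and "subgroup B G"
    and "generate G (A \<union> B) = carrier G"
    and "subgroup H G"
    and "finite (rcosets H)"
    and "\<forall>h\<in>H \<inter> A. \<phi> h = h"
    and "\<forall>h\<in>H \<inter> B. \<phi> h = h"
    and hom: "\<psi> \<in> hom G G" and psi2: "\<forall>h\<in>H. \<psi> h = \<phi> h"
  shows "\<forall>h\<in>H. \<phi> h = h"
proof -
  interpret group G by (rule assms(1))
  interpret gh: group_hom G G \<psi> using hom assms(1) by (simp add: group_hom_def group_hom_axioms_def)
  have urp: "x = y" if "x \<in> carrier G" "y \<in> carrier G" "(n::nat) > 0" "x [^] n = y [^] n" for x y n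
    using assms(2) that unfolding unique_root_property_def by blast
  have fixC: "\<psi> a = a" if C: "subgroup C G" and fC: "\<forall>h\<in>H \<inter> C. \<phi> h = h" and aC: "a \<in> C" for C a
  proof -
    have a: "a \<in> carrier G" using subgroup.subset[OF C] aC by blast
    obtain n :: nat where n: "n > 0" "a [^] n \<in> H"
      using pow_in_fin_index[OF assms(1) assms(6) assms(7) a] by blast
    have "a [^] n \<in> C" using sub_pow_closed[OF assms(1) C aC] .
    hence "a [^] n \<in> H \<inter> C" using n(2) by blast
    hence e1: "\<phi> (a [^] n) = a [^] n" using fC by blast
    have e2: "\<psi> (a [^] n) = \<phi> (a [^] n)" using psi2 n(2) by blast
    have e3: "\<psi> (a [^] n) = \<psi> a [^] n" by (rule gh.hom_nat_pow[OF a])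
    have "\<psi> a [^] n = a [^] n" using e1 e2 e3 by simp
    moreover have "\<psi> a \<in> carrier G" using a by (rule gh.hom_closed)
    ultimately show ?thesis using urp a n(1) by blast
  qed
  have fixAB: "\<psi> h = h" if "h \<in> A \<union> B" for h
  proof (cases "h \<in> A")
    case True then show ?thesis using fixC[OF assms(3) assms(8)] by simp
  next
    case False then have "h \<in> B" using that by simp
    then show ?thesis using fixC[OF assms(4) assms(9)] by simp
  qed
  have fixall: "\<psi> x = x" if "x \<in> generate G (A \<union> B)" for x
    using that
  proof (induction rule: generate.induct)
    case one then show ?case by (rule gh.hom_one)
  next
    case (incl h) then show ?case by (rule fixAB)
  next
    case (inv h)
    hence e: "\<psi> h = h" by (rule fixAB)
    have "h \<in> carrier G" using inv assms(3,4) subgroup.subset by blast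
    hence "\<psi> (inv h) = inv (\<psi> h)" by (rule gh.hom_inv)
    thus ?case using e by simp
  next
    case (eng h1 h2)
    have c: "h1 \<in> carrier G" "h2 \<in> carrier G" using eng.hyps(1,2) assms(5) by simp_all
    have "\<psi> (h1 \<otimes> h2) = \<psi> h1 \<otimes> \<psi> h2" by (rule gh.hom_mult[OF c])
    thus ?case using eng.IH by simp
  qed
  show ?thesis
  proof
    fix h assume h: "h \<in> H"
    have "h \<in> carrier G" using h subgroup.subset[OF assms(6)] by blast
    hence "\<psi> h = h" by (intro fixall) (simp add: assms(5))
    thus "\<phi> h = h" using h psi2 by simp
  qed
qed

theorem lemma3p1:
  fixes G :: "('a, 'b) monoid_scheme"
    and A B H :: "'a set" and \<phi> :: "'a \<Rightarrow> 'a"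
  assumes "group G"
    and "unique_root_property G"
    and "subgroup A G" and "subgroup B G"
    and "generate G (A \<union> B) = carrier G"
    and "subgroup H G"
    and "finite (rcosets\<^bsub>G\<^esub> H)"
    and "\<phi> \<in> iso (subgroup_generated G H) (subgroup_generated G H)"
    and "\<exists>h\<in>H. \<phi> h \<noteq> h"
    and "\<forall>h\<in>H \<inter> A. \<phi> h = h"
    and "\<forall>h\<in>H \<inter> B. \<phi> h = h"
  shows "\<not> (\<exists>\<psi>\<in>iso G G. \<forall>h\<in>H. \<psi> h = \<phi> h)"
proof
  assume "\<exists>\<psi>\<in>iso G G. \<forall>h\<in>H. \<psi> h = \<phi> h"
  then obtain \<psi> where psi: "\<psi> \<in> iso G G" "\<forall>h\<in>H. \<psi> h = \<phi> h" by blast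
  have hom: "\<psi> \<in> hom G G" using psi(1) by (simp add: iso_def)
  have "\<forall>h\<in>H. \<phi> h = h"
    by (rule main_aux[OF assms(1-7) assms(10,11) hom psi(2)])
  thus False using assms(9) by blast
qed

end
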